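(* Let $r$ be a positive integer and $x\in\{0,1\}^\omega$ an $r$-power free Sturmian word. Define $\varphi:\{0,1\}^+\to\{0,1\}$ by $\varphi(u)=0$ if $u\in\mathrm{Fact}(x)$ and $\varphi(u)=1$ otherwise. Then no $y\in\Omega(x)$ admits a $\varphi$-ultra monochromatic factorization.
   Context: $\mathrm{Fact}(x)$ is the set of non-empty finite factors of $x$. A word $x\in\{0,1\}^\omega$ is Sturmian if it is aperiodic (no suffix of $x$ has the form $u^\omega$ with $u$ non-empty) and balanced: for all factors $u,v$ of $x$ with $|u|=|v|$ and each $a\in\{0,1\}$, $\big||u|_a-|v|_a\big|\le 1$. $x$ is $r$-power free if $u^r\notin\mathrm{Fact}(x)$ for every $u\in\mathrm{Fact}(x)$. $\Omega(x)=\{y\in\{0,1\}^\omega:\mathrm{Fact}(y)\subseteq\mathrm{Fact}(x)\}$ (the shift orbit closure of $x$). A factorization $y=V_0V_1V_2\cdots$ with all $V_i$ non-empty is $\varphi$-ultra monochromatic if there is a color $c$ such that for all $k\ge1$, all $0\le n_1<\cdots<n_k$ and all permutations $\sigma$ of $\{1,\dots,k\}$, $\varphi(V_{n_{\sigma(1)}}\cdots V_{n_{\sigma(k)}})=c$. *)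

theory Defs
  imports Main "HOL-Combinatorics.Permutations"
begin

text \<open>Infinite binary words are functions nat \<Rightarrow> bool (False = 0, True = 1);
  finite words are bool lists.\<close>

type_synonym iword = "nat \<Rightarrow> bool"

definition Fact :: "iword \<Rightarrow> bool list set" where
  "Fact x = {u. u \<noteq> [] \<and> (\<exists>i. u = map x [i..<i + length u])}"

definition aperiodic :: "iword \<Rightarrow> bool" where
  "aperiodic x \<longleftrightarrow> \<not> (\<exists>n p. p > 0 \<and> (\<forall>i\<ge>n. x (i + p) = x i))"

definition balanced :: "iword \<Rightarrow> bool" where
  "balanced x \<longleftrightarrow> (\<forall>u\<in>Fact x. \<forall>v\<in>Fact x. length u = length v \<longrightarrow>
      (\<forall>a. \<bar>int (count_list u a) - int (count_list v a)\<bar> \<le> 1))"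

definition sturmian :: "iword \<Rightarrow> bool" where
  "sturmian x \<longleftrightarrow> aperiodic x \<and> balanced x"

definition power_free :: "nat \<Rightarrow> iword \<Rightarrow> bool" where
  "power_free r x \<longleftrightarrow> (\<forall>u\<in>Fact x. concat (replicate r u) \<notin> Fact x)"

definition Omega :: "iword \<Rightarrow> iword set" where
  "Omega x = {y. Fact y \<subseteq> Fact x}"

definition is_factorization :: "iword \<Rightarrow> (nat \<Rightarrow> bool list) \<Rightarrow> bool" where
  "is_factorization y V \<longleftrightarrow> (\<forall>n. V n \<noteq> []) \<and>
     (\<forall>n. concat (map V [0..<n]) = map y [0..<length (concat (map V [0..<n]))])"

definition ultra_monochromatic :: "(bool list \<Rightarrow> 'c) \<Rightarrow> (nat \<Rightarrow> bool list) \<Rightarrow> bool" where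
  "ultra_monochromatic \<phi> V \<longleftrightarrow> (\<exists>c. \<forall>k\<ge>1. \<forall>n::nat \<Rightarrow> nat. \<forall>\<sigma>.
      strict_mono_on {1..k} n \<longrightarrow> \<sigma> permutes {1..k} \<longrightarrow>
      \<phi> (concat (map (\<lambda>i. V (n (\<sigma> i))) [1..<k+1])) = c)"

definition fact_colouring :: "iword \<Rightarrow> bool list \<Rightarrow> nat" where
  "fact_colouring x u = (if u \<in> Fact x then 0 else 1)"

end

theory Submission
  imports Defs "HOL-Analysis.Kronecker_Approximation_Theorem"
begin

definition cnt :: "iword \<Rightarrow> nat \<Rightarrow> nat \<Rightarrow> nat" where
  "cnt x n i = count_list (map x [i..<i+n]) True"

definition mn :: "iword \<Rightarrow> nat \<Rightarrow> nat" where
  "mn x n = (LEAST k. \<exists>i. cnt x n i = k)"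

definition slope :: "iword \<Rightarrow> real" where
  "slope x = (SUP n\<in>{1..}. real (mn x n) / real n)"

lemma cnt_add: "cnt x (a+b) i = cnt x a i + cnt x b (i+a)"
proof -
  have "[i..<i+(a+b)] = [i..<i+a] @ [i+a..<i+a+b]"
    by (metis add.assoc le_add1 upt_add_eq_append)
  then show ?thesis by (simp add: cnt_def)
qed

lemma cnt_0[simp]: "cnt x 0 i = 0" by (simp add: cnt_def)

lemma cnt_1: "cnt x 1 i = (if x i then 1 else 0)" by (simp add: cnt_def)

lemma cnt_le: "cnt x n i \<le> n" unfolding cnt_def
  by (metis count_le_length diff_add_inverse length_map length_upt)

lemma cnt_bal:
  assumes "balanced x" shows "cnt x n i \<le> cnt x n j + 1"
proof (cases "n = 0")
  case True then show ?thesis by simp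
next
  case False
  have "map x [i..<i+n] \<in> Fact x" "map x [j..<j+n] \<in> Fact x"
    using False unfolding Fact_def by auto
  with assms have "\<bar>int (count_list (map x [i..<i+n]) True) - int (count_list (map x [j..<j+n]) True)\<bar> \<le> 1"
    unfolding balanced_def by auto
  then show ?thesis unfolding cnt_def by linarith
qed

lemma mn_ex: "\<exists>i. cnt x n i = mn x n"
  unfolding mn_def by (rule LeastI_ex) auto

lemma mn_le: "mn x n \<le> cnt x n i"
  unfolding mn_def by (rule Least_le) auto

lemma mn_ge: assumes "balanced x" shows "cnt x n i \<le> mn x n + 1"
  using mn_ex[of x n] cnt_bal[OF assms, of n i] by metis

lemma mn_super: "k * mn x n \<le> mn x (k*n)"
proof (induction k)
  case 0 then show ?case by simp
next
  case (Suc k)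
  obtain i where i: "cnt x (n + k*n) i = mn x (n + k*n)" using mn_ex by blast
  have "cnt x (n + k*n) i = cnt x n i + cnt x (k*n) (i+n)" by (rule cnt_add)
  moreover have "mn x n \<le> cnt x n i" "mn x (k*n) \<le> cnt x (k*n) (i+n)" by (rule mn_le)+
  ultimately show ?case using i Suc by simp
qed

lemma cnt_sub: assumes "balanced x" shows "cnt x (k*n) i \<le> k * (mn x n + 1)"
proof (induction k arbitrary: i)
  case 0 then show ?case by simp
next
  case (Suc k)
  have "cnt x (n + k*n) i = cnt x n i + cnt x (k*n) (i+n)" by (rule cnt_add)
  moreover have "cnt x n i \<le> mn x n + 1" by (rule mn_ge[OF assms])
  ultimately show ?case using Suc[of "i+n"] by simp
qed

lemma ratio: assumes "balanced x" "n \<ge> 1" "k \<ge> 1"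
  shows "real (mn x n) / real n \<le> (real (mn x k) + 1) / real k"
proof -
  have "k * mn x n \<le> mn x (k*n)" by (rule mn_super)
  also have "\<dots> \<le> cnt x (k*n) 0" by (rule mn_le)
  also have "\<dots> = cnt x (n*k) 0" by (simp add: mult.commute)
  also have "\<dots> \<le> n * (mn x k + 1)" by (rule cnt_sub[OF assms(1)])
  finally have "real k * real (mn x n) \<le> real n * (real (mn x k) + 1)"
    by (metis of_nat_1 of_nat_add of_nat_le_iff of_nat_mult)
  then show ?thesis using assms by (simp add: field_simps)
qed

lemma slope_bounds: assumes "balanced x" "n \<ge> 1"
  shows "real (mn x n) \<le> slope x * n" "slope x * n \<le> real (mn x n) + 1"
proof -
  have bdd: "bdd_above ((\<lambda>n. real (mn x n) / real n) ` {1..})"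
    by (rule bdd_aboveI2[where M="real (mn x 1) + 1"]) (use ratio[OF assms(1), of _ 1] in auto)
  have "real (mn x n) / n \<le> slope x"
    unfolding slope_def using assms(2) by (intro cSUP_upper[OF _ bdd]) auto
  then show "real (mn x n) \<le> slope x * n" using assms(2) by (simp add: field_simps)
  have "slope x \<le> (real (mn x n) + 1) / n"
    unfolding slope_def using ratio[OF assms(1) _ assms(2)] by (intro cSUP_least) auto
  then show "slope x * n \<le> real (mn x n) + 1" using assms(2) by (simp add: field_simps)
qed

lemma dev: assumes "balanced x" shows "\<bar>real (cnt x n i) - slope x * n\<bar> \<le> 1"
proof (cases "n = 0")
  case True then show ?thesis by simp
next
  case False
  then have "n \<ge> 1" by simp
  have a: "real (mn x n) \<le> real (cnt x n i)" using mn_le[of x n i] by simp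
  have b: "real (cnt x n i) \<le> real (mn x n) + 1" using mn_ge[OF assms, of n i]
    by (metis of_nat_1 of_nat_add of_nat_le_iff)
  from slope_bounds[OF assms \<open>n\<ge>1\<close>] a b show ?thesis by linarith
qed

lemma two_bad:
  assumes bal: "balanced x" and q: "q \<ge> 1" and p: "slope x * real q = of_int p"
    and b1: "int (cnt x q j) \<noteq> p" and b2: "int (cnt x q (j + Suc t * q)) \<noteq> p"
  shows False
proof -
  have s1: "real (mn x q) \<le> of_int p" "of_int p \<le> real (mn x q) + 1"
    using slope_bounds[OF bal q] p by auto
  then have pc: "p = int (mn x q) \<or> p = int (mn x q) + 1" by linarith
  have len: "Suc (Suc t) * q = q + (t*q + q)" by (simp add: algebra_simps)
  have split: "cnt x (Suc (Suc t) * q) j = cnt x q j + cnt x (t*q) (j+q) + cnt x q (j + Suc t * q)"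
    unfolding len cnt_add by (simp add: algebra_simps)
  have d: "\<bar>real (cnt x (Suc (Suc t) * q) j) - slope x * real (Suc (Suc t) * q)\<bar> \<le> 1"
    by (rule dev[OF bal])
  have e: "slope x * real (Suc (Suc t) * q) = real (Suc (Suc t)) * of_int p"
  proof -
    have "slope x * real (Suc (Suc t) * q) = real (Suc (Suc t)) * (slope x * real q)" by (simp only: of_nat_mult mult_ac)
    then show ?thesis using p by simp
  qed
  have r1: "mn x q \<le> cnt x q j" "mn x q \<le> cnt x q (j + Suc t * q)" by (rule mn_le)+
  have r2: "cnt x q j \<le> mn x q + 1" "cnt x q (j + Suc t * q) \<le> mn x q + 1" by (rule mn_ge[OF bal])+
  have m1: "t * mn x q \<le> cnt x (t*q) (j+q)"
    using mn_super[of t x q] mn_le[of x "t*q" "j+q"] by linarith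
  have m2: "cnt x (t*q) (j+q) \<le> t * (mn x q + 1)" by (rule cnt_sub[OF bal])
  from pc show False
  proof
    assume pp: "p = int (mn x q)"
    then have "cnt x q j = mn x q + 1" "cnt x q (j + Suc t * q) = mn x q + 1" using b1 b2 r1 r2 by auto
    then have "cnt x (Suc (Suc t) * q) j \<ge> Suc (Suc t) * mn x q + 2" using split m1 by simp
    then have "real (cnt x (Suc (Suc t) * q) j) \<ge> real (Suc (Suc t) * mn x q + 2)"
      by (simp only: of_nat_le_iff)
    then have "real (cnt x (Suc (Suc t) * q) j) \<ge> real (Suc (Suc t)) * real (mn x q) + 2"
      by (simp only: of_nat_add of_nat_mult of_nat_numeral)
    moreover have "of_int p = real (mn x q)" using pp by simp
    then have "slope x * real (Suc (Suc t) * q) = real (Suc (Suc t)) * real (mn x q)" using e by simp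
    moreover have "real (cnt x (Suc (Suc t) * q) j) - slope x * real (Suc (Suc t) * q) \<le> 1"
      using d by (simp only: abs_le_iff)
    ultimately show False using e by linarith
  next
    assume pp: "p = int (mn x q) + 1"
    then have "cnt x q j = mn x q" "cnt x q (j + Suc t * q) = mn x q" using b1 b2 r1 r2 by auto
    then have "cnt x (Suc (Suc t) * q) j + 2 \<le> Suc (Suc t) * (mn x q + 1)" using split m2
      by (simp add: algebra_simps)
    then have "real (cnt x (Suc (Suc t) * q) j + 2) \<le> real (Suc (Suc t) * (mn x q + 1))"
      by (simp only: of_nat_le_iff)
    then have "real (cnt x (Suc (Suc t) * q) j) + 2 \<le> real (Suc (Suc t)) * (real (mn x q) + 1)"
      by (simp only: of_nat_add of_nat_mult of_nat_numeral of_nat_1)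
    moreover have "of_int p = real (mn x q) + 1" using pp by simp
    then have "slope x * real (Suc (Suc t) * q) = real (Suc (Suc t)) * (real (mn x q) + 1)" using e by simp
    moreover have "slope x * real (Suc (Suc t) * q) - real (cnt x (Suc (Suc t) * q) j) \<le> 1"
      using d by (simp only: abs_le_iff) linarith
    ultimately show False using e by linarith
  qed
qed


lemma rat_periodic:
  assumes bal: "balanced x" and q: "q \<ge> 1" and p: "slope x * real q = of_int p"
  shows "\<exists>N. \<forall>j\<ge>N. x (j+q) = x j"
proof -
  define B where "B = {j. int (cnt x q j) \<noteq> p}"
  have inj: "inj_on (\<lambda>j. j mod q) B"
  proof (rule inj_onI)
    have aux: False if "j1 \<in> B" "j2 \<in> B" "j1 mod q = j2 mod q" "j1 < j2" for j1 j2
    proof -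
      have "q dvd (j2 - j1)" using that by (metis mod_eq_dvd_iff_nat less_imp_le)
      then obtain s where s: "j2 - j1 = q * s" by blast
      with that have "s \<ge> 1" by (cases s) auto
      then obtain t where "s = Suc t" by (cases s) auto
      with s that have "j2 = j1 + Suc t * q" by (simp add: algebra_simps)
      with that two_bad[OF bal q p, of j1 t] show False unfolding B_def by auto
    qed
    fix j1 j2 assume "j1 \<in> B" "j2 \<in> B" "j1 mod q = j2 mod q"
    then show "j1 = j2" using aux[of j1 j2] aux[of j2 j1] by (metis linorder_neqE_nat)
  qed
  have "finite ((\<lambda>j. j mod q) ` B)"
    by (rule finite_subset[of _ "{..<q}"]) (use q in auto)
  then have "finite B" using finite_imageD inj by blast
  then obtain N where N: "\<And>j. j \<in> B \<Longrightarrow> j < N" 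
  proof -
    from finite_nat_bounded[OF \<open>finite B\<close>] obtain k where "B \<subseteq> {..<k}" by (auto simp: lessThan_def)
    then show ?thesis using that by blast
  qed
  have "x (j+q) = x j" if "j \<ge> N" for j
  proof -
    have g: "int (cnt x q j) = p" "int (cnt x q (j+1)) = p" using N[of j] N[of "j+1"] that
      unfolding B_def by force+
    have "cnt x (q+1) j = cnt x q j + cnt x 1 (j+q)" by (rule cnt_add)
    moreover have "cnt x (1+q) j = cnt x 1 j + cnt x q (j+1)" by (rule cnt_add)
    ultimately have "cnt x 1 (j+q) = cnt x 1 j" using g by (simp add: add.commute)
    then show ?thesis unfolding cnt_1 by (auto split: if_splits)
  qed
  then show ?thesis by blast
qed

lemma slope_irr:
  assumes "sturmian x" "q \<ge> 1"
  shows "slope x * real q \<noteq> of_int p"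
proof
  assume "slope x * real q = of_int p"
  from rat_periodic[OF _ assms(2) this] assms(1) obtain N where "\<forall>j\<ge>N. x (j+q) = x j"
    unfolding sturmian_def by blast
  then have "\<exists>n p. p > 0 \<and> (\<forall>i\<ge>n. x (i + p) = x i)" using assms(2)
    by (intro exI[of _ N] exI[of _ q]) auto
  with assms(1) show False unfolding sturmian_def aperiodic_def by blast
qed

lemma dev_strict: assumes "sturmian x" shows "\<bar>real (cnt x n i) - slope x * n\<bar> < 1"
proof (cases "n = 0")
  case True then show ?thesis by simp
next
  case False
  have bal: "balanced x" using assms sturmian_def by blast
  have "\<bar>real (cnt x n i) - slope x * n\<bar> \<noteq> 1"
  proof
    assume "\<bar>real (cnt x n i) - slope x * n\<bar> = 1"
    then have "slope x * real n = of_int (int (cnt x n i) - 1) \<or> slope x * real n = of_int (int (cnt x n i) + 1)"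
      by (auto simp: abs_if split: if_splits)
    moreover have "real (cnt x n i) - 1 = of_int (int (cnt x n i) - 1)" "real (cnt x n i) + 1 = of_int (int (cnt x n i) + 1)" by simp_all
    moreover have "n \<ge> 1" using False by simp
    ultimately show False using slope_irr[OF assms \<open>n\<ge>1\<close>, of "int (cnt x n i) - 1"]
      slope_irr[OF assms \<open>n\<ge>1\<close>, of "int (cnt x n i) + 1"] by argo
  qed
  with dev[OF bal, of n i] show ?thesis by linarith
qed


lemma step_cover:
  fixes g \<gamma> :: real assumes "g \<ge> 0" "\<gamma> > 0"
  shows "\<exists>s::nat. g \<le> real s * \<gamma> \<and> real s * \<gamma> < g + \<gamma> \<and> real s \<le> g / \<gamma> + 1"
proof -
  define s where "s = nat \<lceil>g / \<gamma>\<rceil>"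
  have g0: "g / \<gamma> \<ge> 0" using assms by simp
  have rs: "real s = of_int \<lceil>g / \<gamma>\<rceil>" unfolding s_def using g0 by simp
  have c1: "g / \<gamma> \<le> real s" "real s < g / \<gamma> + 1" unfolding rs
    using ceiling_correct[of "g/\<gamma>"] by linarith+
  have "g \<le> real s * \<gamma>" using c1(1) assms by (simp add: field_simps)
  moreover have "real s * \<gamma> < g + \<gamma>" using c1(2) assms by (simp add: field_simps)
  ultimately show ?thesis using c1 by (intro exI[of _ s]) auto
qed

lemma dense:
  fixes a \<epsilon> :: real
  assumes irr: "\<And>q p. q \<ge> 1 \<Longrightarrow> a * real q \<noteq> of_int p" and eps: "\<epsilon> > 0"
  shows "\<exists>N. \<forall>t. \<exists>j\<le>N. \<exists>k::int. \<bar>t + real j * a - of_int k\<bar> < \<epsilon>"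
proof -
  obtain M :: nat where M: "1 / \<epsilon> < real M" using reals_Archimedean2 by blast
  have "0 < 1 / \<epsilon>" using eps by simp
  then have M0: "M > 0" using M by (metis of_nat_0_less_iff order.strict_trans)
  have "1 / real M < \<epsilon>" using M eps M0 by (simp add: field_simps)
  obtain h k where hk: "0 < k" "\<bar>of_int k * a - of_int h\<bar> < 1 / real M"
    using Dirichlet_approx[OF M0, of a] by blast
  define q where "q = nat k"
  have q1: "q \<ge> 1" and qk: "real q = of_int k" using hk unfolding q_def by auto
  define \<beta> where "\<beta> = real q * a - of_int h"
  have b0: "\<beta> \<noteq> 0" using irr[OF q1, of h] unfolding \<beta>_def by (simp add: mult.commute)
  have bl: "\<bar>\<beta>\<bar> < \<epsilon>" using hk(2) \<open>1 / real M < \<epsilon>\<close> unfolding \<beta>_def qk by linarith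
  define S where "S = nat \<lceil>1 / \<bar>\<beta>\<bar>\<rceil> + 1"
  have S: "1 / \<bar>\<beta>\<bar> + 1 \<le> real S" unfolding S_def
    using ceiling_correct[of "1 / \<bar>\<beta>\<bar>"] by (simp add: of_nat_nat ceiling_le_zero)
  have "\<forall>t. \<exists>j\<le>q * S. \<exists>k::int. \<bar>t + real j * a - of_int k\<bar> < \<epsilon>"
  proof
    fix t :: real
    define f where "f = t - of_int \<lfloor>t\<rfloor>"
    have f: "0 \<le> f" "f < 1" unfolding f_def by linarith+
    have main: "\<exists>k::int. \<bar>t + real s * \<beta> - of_int k\<bar> < \<epsilon>" if
      "(\<beta> > 0 \<and> 1 - f \<le> real s * \<bar>\<beta>\<bar> \<and> real s * \<bar>\<beta>\<bar> < 1 - f + \<bar>\<beta>\<bar>) \<or>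
       (\<beta> < 0 \<and> f \<le> real s * \<bar>\<beta>\<bar> \<and> real s * \<bar>\<beta>\<bar> < f + \<bar>\<beta>\<bar>)" for s :: nat
      using that
    proof
      assume A: "\<beta> > 0 \<and> 1 - f \<le> real s * \<bar>\<beta>\<bar> \<and> real s * \<bar>\<beta>\<bar> < 1 - f + \<bar>\<beta>\<bar>"
      then have "\<bar>t + real s * \<beta> - of_int (\<lfloor>t\<rfloor> + 1)\<bar> < \<epsilon>" using bl unfolding f_def by auto
      then show ?thesis by blast
    next
      assume A: "\<beta> < 0 \<and> f \<le> real s * \<bar>\<beta>\<bar> \<and> real s * \<bar>\<beta>\<bar> < f + \<bar>\<beta>\<bar>"
      then have "\<bar>t + real s * \<beta> - of_int (\<lfloor>t\<rfloor>)\<bar> < \<epsilon>" using bl unfolding f_def by auto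
      then show ?thesis by blast
    qed
    have ga: "\<bar>\<beta>\<bar> > 0" using b0 by simp
    obtain s :: nat where s: "\<exists>k::int. \<bar>t + real s * \<beta> - of_int k\<bar> < \<epsilon>" "real s \<le> 1 / \<bar>\<beta>\<bar> + 1"
    proof (cases "\<beta> > 0")
      case True
      obtain s :: nat where s: "1 - f \<le> real s * \<bar>\<beta>\<bar>" "real s * \<bar>\<beta>\<bar> < 1 - f + \<bar>\<beta>\<bar>" "real s \<le> (1 - f) / \<bar>\<beta>\<bar> + 1"
        using step_cover[of "1 - f" "\<bar>\<beta>\<bar>"] f ga by auto
      have "(1 - f) / \<bar>\<beta>\<bar> \<le> 1 / \<bar>\<beta>\<bar>" using f ga by (simp add: divide_right_mono)
      then show ?thesis using that[of s] main[of s] s True by auto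
    next
      case False
      then have bn: "\<beta> < 0" using b0 by simp
      obtain s :: nat where s: "f \<le> real s * \<bar>\<beta>\<bar>" "real s * \<bar>\<beta>\<bar> < f + \<bar>\<beta>\<bar>" "real s \<le> f / \<bar>\<beta>\<bar> + 1"
        using step_cover[of "f" "\<bar>\<beta>\<bar>"] f ga by auto
      have "f / \<bar>\<beta>\<bar> \<le> 1 / \<bar>\<beta>\<bar>" using f ga by (simp add: divide_right_mono)
      then show ?thesis using that[of s] main[of s] s bn by auto
    qed
    then obtain kk :: int where kk: "\<bar>t + real s * \<beta> - of_int kk\<bar> < \<epsilon>" by blast
    have "s \<le> S" using s(2) S by linarith
    then have "q * s \<le> q * S" by simp
    moreover have "t + real (q * s) * a - of_int (kk + int s * h) = t + real s * \<beta> - of_int kk"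
      unfolding \<beta>_def by (simp add: algebra_simps)
    ultimately show "\<exists>j\<le>q * S. \<exists>k::int. \<bar>t + real j * a - of_int k\<bar> < \<epsilon>"
      using kk by metis
  qed
  then show ?thesis by blast
qed


definition Dl :: "real \<Rightarrow> bool list \<Rightarrow> nat \<Rightarrow> real" where
  "Dl a z j = real (count_list (take j z) True) - a * real j"

lemma Dl_app1: "j \<le> length p \<Longrightarrow> Dl a (p @ s) j = Dl a p j"
  unfolding Dl_def by simp

lemma Dl_app2: "Dl a (p @ s) (length p + j) = Dl a p (length p) + Dl a s j"
  unfolding Dl_def by (simp add: algebra_simps)

lemma Dl_fact:
  assumes "z \<in> Fact x" "j \<le> length z"
  obtains p where "\<And>j. j \<le> length z \<Longrightarrow> Dl a z j = real (cnt x j p) - a * real j"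
proof -
  from assms obtain p where p: "z = map x [p..<p + length z]" unfolding Fact_def by blast
  have "Dl a z j = real (cnt x j p) - a * real j" if "j \<le> length z" for j
  proof -
    have "take j z = map x [p..<p+j]" using that by (subst p) (simp add: take_map)
    then show ?thesis unfolding Dl_def cnt_def by simp
  qed
  then show ?thesis using that by blast
qed

lemma Drange:
  assumes st: "sturmian x" and z: "z \<in> Fact x" and ij: "i \<le> length z" "j \<le> length z"
  shows "\<bar>Dl (slope x) z j - Dl (slope x) z i\<bar> < 1"
proof -
  obtain p where p: "\<And>j. j \<le> length z \<Longrightarrow> Dl (slope x) z j = real (cnt x j p) - slope x * real j"
    using Dl_fact[OF z ij(1)] by blast
  have gen: "\<bar>Dl (slope x) z j - Dl (slope x) z i\<bar> < 1" if "i \<le> j" "i \<le> length z" "j \<le> length z" for i j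
  proof -
    have c: "cnt x j p = cnt x i p + cnt x (j - i) (p + i)" using cnt_add[of x i "j-i" p] that by simp
    have "Dl (slope x) z j - Dl (slope x) z i = real (cnt x (j-i) (p+i)) - slope x * real (j - i)"
      using p[OF that(2)] p[OF that(3)] c that(1) by (simp add: algebra_simps of_nat_diff)
    then show ?thesis using dev_strict[OF st, of "j-i" "p+i"] by simp
  qed
  show ?thesis
  proof (cases "i \<le> j")
    case True then show ?thesis using gen ij by blast
  next
    case False then show ?thesis using gen[of j i] ij by (simp add: abs_minus_commute)
  qed
qed

lemma Ddense:
  assumes st: "sturmian x" and eps: "\<epsilon> > 0"
  shows "\<exists>N. \<forall>z. length z \<ge> N \<longrightarrow> (\<forall>t. \<exists>j\<le>length z. \<exists>k::int. \<bar>Dl (slope x) z j - t - of_int k\<bar> < \<epsilon>)"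
proof -
  obtain N where N: "\<forall>t. \<exists>j\<le>N. \<exists>k::int. \<bar>t + real j * slope x - of_int k\<bar> < \<epsilon>"
    using dense[OF slope_irr[OF st] eps] by blast
  have "\<exists>j\<le>length z. \<exists>k::int. \<bar>Dl (slope x) z j - t - of_int k\<bar> < \<epsilon>" if "length z \<ge> N" for z t
  proof -
    obtain j k where jk: "j \<le> N" "\<bar>t + real j * slope x - of_int k\<bar> < \<epsilon>" using N by blast
    have "Dl (slope x) z j - t - of_int (int (count_list (take j z) True) - k) = - (t + real j * slope x - of_int k)"
      unfolding Dl_def by (simp add: algebra_simps)
    then have "\<bar>Dl (slope x) z j - t - of_int (int (count_list (take j z) True) - k)\<bar> < \<epsilon>"
      using jk(2) by (simp only: abs_minus_cancel)
    moreover have "j \<le> length z" using jk(1) that by simp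
    ultimately show ?thesis by blast
  qed
  then show ?thesis by blast
qed

lemma key:
  fixes F G :: "nat \<Rightarrow> real"
  assumes cross: "\<And>i j. i \<le> na \<Longrightarrow> j \<le> nb \<Longrightarrow> \<bar>(B1 + F i) - (B2 + G j)\<bar> < 1"
    and densG: "\<And>t. \<exists>j\<le>nb. \<exists>k::int. \<bar>G j - t - of_int k\<bar> < \<epsilon>"
    and i0: "i0 \<le> na" and j0: "j0 \<le> nb" "\<And>j. j \<le> nb \<Longrightarrow> G j0 \<le> G j"
  shows "B2 + G j0 < B1 + F i0 + 2 * \<epsilon>"
proof (rule ccontr)
  assume H: "\<not> ?thesis"
  define A where "A = B1 + F i0"
  obtain j k where jk: "j \<le> nb" "\<bar>G j - (A + \<epsilon> - B2) - of_int k\<bar> < \<epsilon>" using densG by blast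
  have c: "\<bar>A - (B2 + G j)\<bar> < 1" using cross[OF i0 jk(1)] unfolding A_def .
  have g: "G j0 \<le> G j" using j0(2) jk(1) .
  have k1: "of_int k < (1::real)" using c jk(2) g H unfolding A_def by linarith
  have k2: "of_int k > (0::real)" using c jk(2) g H unfolding A_def by linarith
  have "k < 1" using k1 by simp
  moreover have "k > 0" using k2 by simp
  ultimately show False by linarith
qed

lemma ex_argmin: fixes F :: "nat \<Rightarrow> real" and n :: nat shows "\<exists>i0\<le>n. \<forall>i\<le>n. F i0 \<le> F i"
proof (induction n)
  case 0 then show ?case by auto
next
  case (Suc n)
  then obtain i0 where i0: "i0 \<le> n" "\<forall>i\<le>n. F i0 \<le> F i" by blast
  show ?case
  proof (cases "F (Suc n) < F i0")
    case True then show ?thesis using i0 by (intro exI[of _ "Suc n"]) (auto simp: le_Suc_eq)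
  next
    case False then show ?thesis using i0 by (intro exI[of _ i0]) (auto simp: le_Suc_eq)
  qed
qed


lemma mid:
  assumes st: "sturmian x" and P: "v @ w \<in> Fact x" and Q: "v @ u @ w \<in> Fact x"
    and dF: "\<And>t. \<exists>j\<le>length v. \<exists>k::int. \<bar>Dl (slope x) v j - t - of_int k\<bar> < \<epsilon>"
    and dG: "\<And>t. \<exists>j\<le>length w. \<exists>k::int. \<bar>Dl (slope x) w j - t - of_int k\<bar> < \<epsilon>"
  shows "\<bar>Dl (slope x) u (length u)\<bar> < 4 * \<epsilon>"
proof -
  define F where "F = Dl (slope x) v"
  define G where "G = Dl (slope x) w"
  define d where "d = Dl (slope x) u (length u)"
  obtain i0 where i0: "i0 \<le> length v" "\<And>i. i \<le> length v \<Longrightarrow> F i0 \<le> F i" using ex_argmin[of "length v" F] by blast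
  obtain j0 where j0: "j0 \<le> length w" "\<And>j. j \<le> length w \<Longrightarrow> G j0 \<le> G j" using ex_argmin[of "length w" G] by blast
  have cP: "\<bar>(0 + F i) - (F (length v) + G j)\<bar> < 1" if "i \<le> length v" "j \<le> length w" for i j
  proof -
    have "\<bar>Dl (slope x) (v@w) (length v + j) - Dl (slope x) (v@w) i\<bar> < 1"
      by (rule Drange[OF st P]) (use that in auto)
    then show ?thesis using Dl_app1[OF that(1), of "slope x" w] Dl_app2[of "slope x" v w j]
      unfolding F_def G_def by (simp add: abs_minus_commute)
  qed
  have cQ: "\<bar>(0 + F i) - ((F (length v) + d) + G j)\<bar> < 1" if "i \<le> length v" "j \<le> length w" for i j
  proof -
    have "\<bar>Dl (slope x) (v@u@w) (length v + (length u + j)) - Dl (slope x) (v@u@w) i\<bar> < 1"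
      by (rule Drange[OF st Q]) (use that in auto)
    then show ?thesis using Dl_app1[OF that(1), of "slope x" "u@w"] Dl_app2[of "slope x" v "u@w" "length u + j"]
      Dl_app2[of "slope x" u w j]
      unfolding F_def G_def d_def by (simp add: abs_minus_commute algebra_simps)
  qed
  have dF': "\<And>t. \<exists>j\<le>length v. \<exists>k::int. \<bar>F j - t - of_int k\<bar> < \<epsilon>" using dF unfolding F_def .
  have dG': "\<And>t. \<exists>j\<le>length w. \<exists>k::int. \<bar>G j - t - of_int k\<bar> < \<epsilon>" using dG unfolding G_def .
  have 1: "F (length v) + G j0 < 0 + F i0 + 2 * \<epsilon>"
    by (rule key[where na="length v" and nb="length w", OF cP dG' i0(1) j0]) auto
  have 2: "0 + F i0 < F (length v) + G j0 + 2 * \<epsilon>"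
    by (rule key[where na="length w" and nb="length v", OF _ dF' j0(1) i0])
       (use cP in \<open>auto simp: abs_minus_commute\<close>)
  have 3: "(F (length v) + d) + G j0 < 0 + F i0 + 2 * \<epsilon>"
    by (rule key[where na="length v" and nb="length w", OF cQ dG' i0(1) j0]) auto
  have 4: "0 + F i0 < (F (length v) + d) + G j0 + 2 * \<epsilon>"
    by (rule key[where na="length w" and nb="length v", OF _ dF' j0(1) i0])
       (use cQ in \<open>auto simp: abs_minus_commute\<close>)
  from 1 2 3 4 show ?thesis unfolding d_def by linarith
qed


lemma ultra_fact:
  assumes y: "y \<in> Omega x" and fac: "is_factorization y V"
    and um: "ultra_monochromatic (fact_colouring x) V"
  shows "\<And>k n \<sigma>. k \<ge> 1 \<Longrightarrow> strict_mono_on {1..k} n \<Longrightarrow> \<sigma> permutes {1..k} \<Longrightarrow>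
      concat (map (\<lambda>i. V (n (\<sigma> i))) [1..<k+1]) \<in> Fact x"
proof -
  obtain c where c0: "\<forall>k\<ge>1. \<forall>n::nat\<Rightarrow>nat. \<forall>\<sigma>.
      strict_mono_on {1..k} n \<longrightarrow> \<sigma> permutes {1..k} \<longrightarrow>
      fact_colouring x (concat (map (\<lambda>i. V (n (\<sigma> i))) [1..<k+1])) = c"
    using um unfolding ultra_monochromatic_def by (elim exE) (rule that)
  have c: "fact_colouring x (concat (map (\<lambda>i. V (n (\<sigma> i))) [1..<k+1])) = c"
    if "k \<ge> 1" "strict_mono_on {1..k} n" "\<sigma> permutes {1..k}" for k n \<sigma>
    using c0 that by blast
  have "concat (map V [0..<1]) = map y [0..<length (concat (map V [0..<1]))]"
    using fac unfolding is_factorization_def by blast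
  then have v0: "V 0 = map y [0..<length (V 0)]" by simp
  have "V 0 \<noteq> []" using fac unfolding is_factorization_def by blast
  then have "V 0 \<in> Fact y" unfolding Fact_def using v0 by (metis (mono_tags, lifting) add_0 mem_Collect_eq)
  then have V0: "V 0 \<in> Fact x" using y unfolding Omega_def by blast
  have "strict_mono_on {1..1} (\<lambda>_::nat. 0::nat)" by (rule strict_mono_onI) simp
  moreover have "id permutes {1..1::nat}" by (rule permutes_id)
  ultimately have "fact_colouring x (V 0) = c"
    using c[of 1 "\<lambda>_. 0" id] by simp
  with V0 have c0: "c = 0" by (simp add: fact_colouring_def)
  fix k :: nat and n \<sigma> :: "nat \<Rightarrow> nat" assume "k \<ge> 1" "strict_mono_on {1..k} n" "\<sigma> permutes {1..k}"
  from c[OF this] c0 show "concat (map (\<lambda>i. V (n (\<sigma> i))) [1..<k+1]) \<in> Fact x"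
    unfolding fact_colouring_def by (auto split: if_splits)
qed

theorem proposition2p5:
  fixes r :: nat and x :: iword
  assumes "r \<ge> 1" and "sturmian x" and "power_free r x"
  shows "\<not> (\<exists>y\<in>Omega x. \<exists>V. is_factorization y V \<and>
            ultra_monochromatic (fact_colouring x) V)"
proof
  assume "\<exists>y\<in>Omega x. \<exists>V. is_factorization y V \<and> ultra_monochromatic (fact_colouring x) V"
  then obtain y V where y: "y \<in> Omega x" and fac: "is_factorization y V"
    and um: "ultra_monochromatic (fact_colouring x) V" by blast
  note U = ultra_fact[OF y fac um]
  have ne: "V i \<noteq> []" for i using fac unfolding is_factorization_def by blast
  have U1: "V i \<in> Fact x" for i
  proof -
    have "strict_mono_on {1..1} (\<lambda>_::nat. i)" by (rule strict_mono_onI) simp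
    moreover have "id permutes {1..1::nat}" by (rule permutes_id)
    ultimately show ?thesis using U[of 1 "\<lambda>_. i" id] by simp
  qed
  have U2: "V i @ V j \<in> Fact x" if "i < j" for i j
  proof -
    have "strict_mono_on {1..2} (\<lambda>t::nat. if t = 1 then i else j)" by (rule strict_mono_onI) (use that in auto)
    moreover have "id permutes {1..2::nat}" by (rule permutes_id)
    ultimately have "concat (map (\<lambda>t. V ((\<lambda>t. if t = 1 then i else j) (id t))) [1..<2+1]) \<in> Fact x"
      using U[of 2 "\<lambda>t. if t = 1 then i else j" id] by simp
    moreover have "[1..<2+1] = [1, 2::nat]" by (simp add: upt_rec)
    ultimately show ?thesis by simp
  qed
  have U3: "V i @ V 0 @ V j \<in> Fact x" if "0 < i" "i < j" for i j
  proof -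
    have "strict_mono_on {1..3} (\<lambda>t::nat. if t = 1 then 0 else if t = 2 then i else j)"
        by (rule strict_mono_onI) (use that in auto)
    moreover have "Transposition.transpose 1 2 permutes {1..3::nat}" by (rule permutes_swap_id) auto
    ultimately have "concat (map (\<lambda>t. V ((\<lambda>t. if t = 1 then 0 else if t = 2 then i else j) (Transposition.transpose 1 2 t))) [1..<3+1]) \<in> Fact x"
      using U[of 3 "\<lambda>t. if t = 1 then 0 else if t = 2 then i else j" "Transposition.transpose 1 2"] by simp
    moreover have "[1..<3+1] = [1, 2, 3::nat]" by (simp add: upt_rec)
    ultimately show ?thesis by simp
  qed
  have long: "infinite {i. N \<le> length (V i)}" for N
  proof
    assume fin: "finite {i. N \<le> length (V i)}"
    obtain M where "{i. N \<le> length (V i)} \<subseteq> {..<M}" using finite_nat_bounded[OF fin] by blast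
    then have M: "\<And>i. N \<le> length (V i) \<Longrightarrow> i < M" by blast
    have infA: "infinite {M..}" by (simp add: infinite_Ici)
    have "V ` {M..} \<subseteq> {xs. set xs \<subseteq> UNIV \<and> length xs \<le> N}"
    proof
      fix z assume "z \<in> V ` {M..}"
      then obtain i where "i \<ge> M" "z = V i" by auto
      then have "\<not> N \<le> length z" using M[of i] by auto
      then show "z \<in> {xs. set xs \<subseteq> UNIV \<and> length xs \<le> N}" by simp
    qed
    then have "finite (V ` {M..})" using finite_lists_length_le[of "UNIV :: bool set" N]
      finite_subset by auto
    then obtain i0 where i0: "i0 \<in> {M..}" "infinite {a \<in> {M..}. V a = V i0}"
      using pigeonhole_infinite[OF infA] by blast
    define F where "F = {a \<in> {M..}. V a = V i0}"
    have infF: "infinite F" using i0 F_def by simp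
    have "strict_mono_on {1..r} (\<lambda>t. enumerate F (t - 1))"
      by (rule strict_mono_onI) (auto intro!: enumerate_mono[OF _ infF])
    moreover have "id permutes {1..r}" by (rule permutes_id)
    ultimately have "concat (map (\<lambda>t. V ((\<lambda>t. enumerate F (t - 1)) (id t))) [1..<r+1]) \<in> Fact x"
      using U[of r "\<lambda>t. enumerate F (t - 1)" id] assms(1) by blast
    moreover have "map (\<lambda>t. V ((\<lambda>t. enumerate F (t - 1)) (id t))) [1..<r+1] = map (\<lambda>t. V i0) [1..<r+1]"
    proof (rule map_cong[OF refl])
      fix t show "V ((\<lambda>t. enumerate F (t - 1)) (id t)) = V i0"
        using enumerate_in_set[OF infF, of "t - 1"] unfolding F_def by simp
    qed
    moreover have "map (\<lambda>t. V i0) [1..<r+1] = replicate r (V i0)"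
      using map_replicate_const[of "V i0" "[1..<r+1]"] by simp
    ultimately have "concat (replicate r (V i0)) \<in> Fact x" by metis
    with U1[of i0] assms(3) show False unfolding power_free_def by blast
  qed
  define \<alpha> where "\<alpha> = slope x"
  define d where "d = Dl \<alpha> (V 0) (length (V 0))"
  have "d \<noteq> 0"
  proof
    assume "d = 0"
    then have "\<alpha> * real (length (V 0)) = of_int (int (count_list (V 0) True))"
      unfolding d_def Dl_def by simp
    moreover have "length (V 0) \<ge> 1" using ne[of 0] by (cases "V 0") auto
    ultimately show False using slope_irr[OF assms(2)] unfolding \<alpha>_def by blast
  qed
  define \<epsilon> where "\<epsilon> = \<bar>d\<bar> / 4"
  have eps: "\<epsilon> > 0" using \<open>d \<noteq> 0\<close> unfolding \<epsilon>_def by simp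
  obtain N where N: "\<And>z t. length z \<ge> N \<Longrightarrow> \<exists>j\<le>length z. \<exists>k::int. \<bar>Dl (slope x) z j - t - of_int k\<bar> < \<epsilon>"
    using Ddense[OF assms(2) eps] by blast
  obtain i where i: "i > 0" "N \<le> length (V i)"
    using long[of N] unfolding infinite_nat_iff_unbounded by blast
  obtain j where j: "j > i" "N \<le> length (V j)"
    using long[of N] unfolding infinite_nat_iff_unbounded by blast
  have "\<bar>Dl (slope x) (V 0) (length (V 0))\<bar> < 4 * \<epsilon>"
    by (rule mid[OF assms(2) U2[OF j(1)] U3[OF i(1) j(1)]]) (use N i j in auto)
  then show False unfolding \<epsilon>_def d_def \<alpha>_def by simp
qed

end
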